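(* Let $(X,d)$ be a sequentially right $K$-complete quasi-metric space and $\varphi:X\to\mathbb{R}\cup\{\infty\}$ a proper, bounded below, nearly lower semicontinuous function. For $x\in X$ let $S(x)=\{y\in X:\varphi(y)+d(y,x)\le\varphi(x)\}$. Suppose that for every $x\in X$ with $\varphi(x)>\inf\varphi(X)$ there exists $y\in S(x)$ with $\varphi(y)<\varphi(x)$. Then there exists $z\in X$ with $\varphi(z)=\inf\varphi(X)$.
   Context: A quasi-metric on $X$ is $d:X\times X\to[0,\infty)$ with $d(x,x)=0$, $d(x,z)\le d(x,y)+d(y,z)$, and $d(x,y)=d(y,x)=0\Rightarrow x=y$ (no symmetry). Topology $\tau_d$: neighbourhood base at $x$ given by $\{y:d(x,y)<r\}$, $r>0$; $x_n\to x$ iff $d(x,x_n)\to0$. A sequence $(x_n)$ is right $K$-Cauchy if for every $\varepsilon>0$ there is $n_\varepsilon$ with $d(x_{n+k},x_n)<\varepsilon$ for all $n\ge n_\varepsilon$, $k\in\mathbb{N}$; $X$ is sequentially right $K$-complete if every right $K$-Cauchy sequence converges. $\varphi$ is proper if finite somewhere; nearly lower semicontinuous if $\varphi(x)\le\liminf_n\varphi(x_n)$ for every sequence with pairwise distinct terms converging to $x$. *)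

theory Defs
  imports "HOL-Analysis.Analysis"
begin

definition quasi_metric :: "('a \<Rightarrow> 'a \<Rightarrow> real) \<Rightarrow> bool" where
  "quasi_metric d \<longleftrightarrow>
     (\<forall>x y. d x y \<ge> 0) \<and> (\<forall>x. d x x = 0) \<and>
     (\<forall>x y z. d x z \<le> d x y + d y z) \<and>
     (\<forall>x y. d x y = 0 \<and> d y x = 0 \<longrightarrow> x = y)"

definition qconv :: "('a \<Rightarrow> 'a \<Rightarrow> real) \<Rightarrow> (nat \<Rightarrow> 'a) \<Rightarrow> 'a \<Rightarrow> bool" where
  "qconv d s x \<longleftrightarrow> (\<lambda>n. d x (s n)) \<longlonglongrightarrow> 0"

definition right_K_Cauchy :: "('a \<Rightarrow> 'a \<Rightarrow> real) \<Rightarrow> (nat \<Rightarrow> 'a) \<Rightarrow> bool" where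
  "right_K_Cauchy d s \<longleftrightarrow>
     (\<forall>\<epsilon>>0. \<exists>N. \<forall>n\<ge>N. \<forall>k::nat. d (s (n + k)) (s n) < \<epsilon>)"

definition seq_right_K_complete :: "('a \<Rightarrow> 'a \<Rightarrow> real) \<Rightarrow> bool" where
  "seq_right_K_complete d \<longleftrightarrow> (\<forall>s. right_K_Cauchy d s \<longrightarrow> (\<exists>x. qconv d s x))"

definition nearly_lsc :: "('a \<Rightarrow> 'a \<Rightarrow> real) \<Rightarrow> ('a \<Rightarrow> ereal) \<Rightarrow> bool" where
  "nearly_lsc d \<phi> \<longleftrightarrow>
     (\<forall>s x. inj s \<and> qconv d s x \<longrightarrow> \<phi> x \<le> liminf (\<lambda>n. \<phi> (s n)))"

definition proper_fun :: "('a \<Rightarrow> ereal) \<Rightarrow> bool" where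
  "proper_fun \<phi> \<longleftrightarrow> (\<exists>x. \<phi> x \<noteq> \<infinity>)"

end

theory Submission
  imports Defs
begin

theorem theorem3p5:
  fixes d :: "'a \<Rightarrow> 'a \<Rightarrow> real" and \<phi> :: "'a \<Rightarrow> ereal"
  assumes "quasi_metric d"
    and "seq_right_K_complete d"
    and "\<forall>x. \<phi> x \<noteq> - \<infinity>"
    and "proper_fun \<phi>"
    and "\<exists>c::real. \<forall>x. ereal c \<le> \<phi> x"
    and "nearly_lsc d \<phi>"
    and "\<forall>x. \<phi> x > (INF u. \<phi> u) \<longrightarrow>
           (\<exists>y. \<phi> y + ereal (d y x) \<le> \<phi> x \<and> \<phi> y < \<phi> x)"
  shows "\<exists>z. \<phi> z = (INF u. \<phi> u)"
proof (rule ccontr)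
  assume nz: "\<not> (\<exists>z. \<phi> z = (INF u. \<phi> u))"
  have gt: "\<phi> z > (INF u. \<phi> u)" for z
    using nz INF_lower[of z UNIV \<phi>] by (metis UNIV_I order_le_less)
  have H: "\<And>x. \<exists>y. \<phi> y + ereal (d y x) \<le> \<phi> x \<and> \<phi> y < \<phi> x"
    using assms(7) gt by blast
  obtain c :: real where c: "\<And>x. ereal c \<le> \<phi> x" using assms(5) by blast
  have d0: "\<And>x y. d x y \<ge> 0" and dxx: "\<And>x. d x x = 0"
    using assms(1) unfolding quasi_metric_def by auto
  have tri: "\<And>x y z. d x z \<le> d x y + d y z"
    using assms(1) unfolding quasi_metric_def by blast
  obtain x0 where x0: "\<phi> x0 \<noteq> \<infinity>" using assms(4) unfolding proper_fun_def by blast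
  define S where "S x = {y. \<phi> y + ereal (d y x) \<le> \<phi> x}" for x
  have ex: "\<exists>y. y \<in> S x \<and> \<phi> y < \<phi> x \<and> \<phi> y < (INF z\<in>S x. \<phi> z) + ereal (1 / real (Suc n))"
    for x n
  proof -
    obtain y0 where y0: "y0 \<in> S x" "\<phi> y0 < \<phi> x" using H[of x] unfolding S_def by blast
    define I where "I = (INF z\<in>S x. \<phi> z)"
    have "ereal c \<le> I" unfolding I_def by (rule INF_greatest) (use c in auto)
    moreover have "I \<le> \<phi> y0" unfolding I_def using y0(1) by (rule INF_lower)
    ultimately obtain i where i: "I = ereal i" using y0(2)
      by (cases I) auto
    have "I < \<phi> x" using \<open>I \<le> \<phi> y0\<close> y0(2) by simp
    moreover have "I < I + ereal (1 / real (Suc n))" using i by simp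
    ultimately have "I < min (\<phi> x) (I + ereal (1 / real (Suc n)))" by simp
    then obtain y where "y \<in> S x" "\<phi> y < min (\<phi> x) (I + ereal (1 / real (Suc n)))"
      unfolding I_def INF_less_iff by blast
    then show ?thesis unfolding I_def by auto
  qed
  define nxt where "nxt x n = (SOME y. y \<in> S x \<and> \<phi> y < \<phi> x \<and> \<phi> y < (INF z\<in>S x. \<phi> z) + ereal (1 / real (Suc n)))" for x n
  have nxt: "nxt x n \<in> S x \<and> \<phi> (nxt x n) < \<phi> x \<and> \<phi> (nxt x n) < (INF z\<in>S x. \<phi> z) + ereal (1 / real (Suc n))" for x n
    unfolding nxt_def by (rule someI_ex) (rule ex)
  define xs where "xs = rec_nat x0 (\<lambda>n x. nxt x n)"
  have xs0: "xs 0 = x0" and xsS: "xs (Suc n) = nxt (xs n) n" for n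
    unfolding xs_def by simp_all
  have fin: "\<phi> (xs n) \<noteq> \<infinity>" for n
  proof (cases n)
    case 0 then show ?thesis using xs0 x0 by simp
  next
    case (Suc m) then show ?thesis using nxt[of "xs m" m] xsS[of m] by auto
  qed
  define r where "r n = real_of_ereal (\<phi> (xs n))" for n
  have r: "\<phi> (xs n) = ereal (r n)" for n
    unfolding r_def using fin[of n] assms(3) by (cases "\<phi> (xs n)") auto
  have rc: "c \<le> r n" for n using c[of "xs n"] r[of n] by simp
  have step: "r (Suc n) + d (xs (Suc n)) (xs n) \<le> r n" for n
    using nxt[of "xs n" n] unfolding xsS[symmetric] S_def by (simp add: r)
  have rdec: "r (Suc n) < r n" for n
    using nxt[of "xs n" n] unfolding xsS[symmetric] by (simp add: r)
  have inf: "r (Suc n) < ereal (r' ) + 1 / real (Suc n)" if "y \<in> S (xs n)" "\<phi> y = ereal r'" for n y r'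
  proof -
    have "(INF z\<in>S (xs n). \<phi> z) \<le> \<phi> y" using that(1) by (rule INF_lower)
    then have "ereal (r (Suc n)) < ereal r' + ereal (1 / real (Suc n))"
      using nxt[of "xs n" n] unfolding xsS[symmetric] r that(2)
      by (meson add_right_mono less_le_trans)
    then show ?thesis by simp
  qed
  have chain: "r (n + k) + d (xs (n + k)) (xs n) \<le> r n" for n k
  proof (induction k)
    case 0 then show ?case using dxx by simp
  next
    case (Suc k)
    have "d (xs (n + Suc k)) (xs n) \<le> d (xs (Suc (n + k))) (xs (n + k)) + d (xs (n + k)) (xs n)"
      using tri by simp
    then show ?case using Suc step[of "n + k"] by simp
  qed
  have decr: "m < n \<Longrightarrow> r n < r m" for m n
  proof (induction n)
    case 0 then show ?case by simp
  next
    case (Suc n) then show ?case using rdec[of n] by (cases "m = n") auto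
  qed
  have "decseq r" using rdec by (simp add: decseq_SucI less_imp_le)
  then obtain L where L: "r \<longlonglongrightarrow> L" "\<And>i. L \<le> r i"
    using decseq_convergent[of r c] rc by blast
  have cauchy: "right_K_Cauchy d xs"
    unfolding right_K_Cauchy_def
  proof (intro allI impI)
    fix e :: real assume e: "e > 0"
    obtain N where N: "\<And>n. n \<ge> N \<Longrightarrow> dist (r n) L < e"
      using L(1) e unfolding LIMSEQ_def by blast
    show "\<exists>N. \<forall>n\<ge>N. \<forall>k. d (xs (n + k)) (xs n) < e"
    proof (intro exI allI impI)
      fix n k assume "n \<ge> N"
      then have "r n - L < e" using N[of n] L(2)[of n] by (simp add: dist_real_def)
      then show "d (xs (n + k)) (xs n) < e" using chain[of n k] L(2)[of "n+k"] by simp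
    qed
  qed
  then obtain xst where xst: "(\<lambda>n. d xst (xs n)) \<longlonglongrightarrow> 0"
    using assms(2) unfolding seq_right_K_complete_def qconv_def by blast
  have injxs: "inj xs"
  proof (rule injI)
    fix a b assume "xs a = xs b"
    then have "r a = r b" by (simp add: r_def)
    then show "a = b" using decr[of a b] decr[of b a] by (cases a b rule: linorder_cases) auto
  qed
  have "(\<lambda>n. \<phi> (xs n)) \<longlonglongrightarrow> ereal L" unfolding r using L(1) by simp
  then have "liminf (\<lambda>n. \<phi> (xs n)) = ereal L" by (simp add: lim_imp_Liminf)
  then have phist: "\<phi> xst \<le> ereal L"
    using assms(6) injxs xst unfolding nearly_lsc_def qconv_def by metis
  then obtain p where p: "\<phi> xst = ereal p" "p \<le> L" using assms(3)[rule_format, of xst]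
    by (cases "\<phi> xst") auto
  have dst: "d xst (xs n) \<le> r n - L" for n
  proof -
    have lim: "(\<lambda>k. d xst (xs (n + k)) + (r n - r (n + k))) \<longlonglongrightarrow> 0 + (r n - L)"
    proof (intro tendsto_intros)
      show "(\<lambda>k. d xst (xs (n + k))) \<longlonglongrightarrow> 0"
        using LIMSEQ_ignore_initial_segment[OF xst, of n] by (simp add: add.commute)
      show "(\<lambda>k. r (n + k)) \<longlonglongrightarrow> L"
        using LIMSEQ_ignore_initial_segment[OF L(1), of n] by (simp add: add.commute)
    qed
    have "d xst (xs n) \<le> d xst (xs (n + k)) + (r n - r (n + k))" for k
      using tri[of xst "xs n" "xs (n+k)"] chain[of n k] by simp
    then show ?thesis using LIMSEQ_le_const[OF lim] by auto
  qed
  obtain y where y: "\<phi> y + ereal (d y xst) \<le> \<phi> xst" "\<phi> y < \<phi> xst" using H[of xst] by blast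
  obtain q where q: "\<phi> y = ereal q" using y(2) assms(3)[rule_format, of y] p(1)
    by (cases "\<phi> y") auto
  have q1: "q + d y xst \<le> p" "q < p" using y p q by auto
  have yS: "y \<in> S (xs n)" for n
  proof -
    have "q + d y (xs n) \<le> q + d y xst + d xst (xs n)" using tri[of y "xs n" xst] by simp
    also have "\<dots> \<le> p + (r n - L)" using q1 dst[of n] by simp
    also have "\<dots> \<le> r n" using p by simp
    finally show ?thesis unfolding S_def using q r by simp
  qed
  have "L \<le> q"
  proof (rule ccontr)
    assume "\<not> L \<le> q"
    then have "L - q > 0" by simp
    then obtain n where n: "inverse (real (Suc n)) < L - q" using reals_Archimedean by blast
    have "r (Suc n) < q + 1 / real (Suc n)" using inf[OF yS[of n] q] by simp
    then show False using n L(2)[of "Suc n"] by (simp add: inverse_eq_divide)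
  qed
  then show False using q1 p by simp
qed

end
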